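(* Let $\lambda_1,\dots,\lambda_p\ge0$ be pairwise distinct, $\Sigma=\mathrm{diag}(\lambda_1,\dots,\lambda_p)$, $E$ a real symmetric $p\times p$ matrix, $\widehat\Sigma=\Sigma+E$, $x$ an eigenvalue of $\widehat\Sigma$, and $k\in\arg\min_m|\lambda_m-x|$. Let $\Lambda_k=|D_k|^{1/2}E|D_k|^{1/2}$ and suppose $\|\Lambda_k\|<1$. Then $I_p-D_kEP_k$ is invertible, and every eigenvector $\vec\eta$ of $\widehat\Sigma$ for $x$ satisfies $\langle\vec\eta,\vec\mu_k\rangle\ne0$; normalizing so that $\langle\vec\eta,\vec\mu_k\rangle=1$, we have $$\|\vec\eta-\vec\mu_k\|\le\sqrt{\frac{2}{\delta_k}}\;\frac{1}{1-\|\Lambda_k\|}\;\Bigl(\sum_{j\ne k}\frac{E_{jk}^2}{|\lambda_j-x|}\Bigr)^{1/2}.$$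
   Context: $\vec\mu_1,\dots,\vec\mu_p$ are the standard basis vectors of $\mathbb R^p$; $\|\cdot\|$ is the Euclidean norm for vectors and operator norm for matrices; $\delta_k=\min_{j\ne k}|\lambda_k-\lambda_j|$. $P_k$ is the diagonal matrix with entry $0$ at position $k$ and $1$ elsewhere. $D_k=-\mathrm{diag}(d_1,\dots,d_p)$ with $d_j=1/(\lambda_j-x)$ for $j\ne k$ and $d_k=0$ (well defined since $x\ne\lambda_j$ for $j\neq k$ by the choice of $k$). $|D_k|^{1/2}$ is the diagonal matrix with entries $|\lambda_j-x|^{-1/2}$ for $j\ne k$ and $0$ at position $k$. *)

theory Defs
  imports "HOL-Analysis.Analysis"
begin

text \<open>Matrices are p x p with p = CARD('n); indices range over the finite type 'n.\<close>

definition diag_mat :: "('n::finite \<Rightarrow> real) \<Rightarrow> real^'n^'n" where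
  "diag_mat d = (\<chi> i j. if i = j then d i else 0)"

definition mat_opnorm :: "real^'n^'m \<Rightarrow> real" where
  "mat_opnorm A = onorm (\<lambda>v. A *v v)"

definition Pk :: "'n::finite \<Rightarrow> real^'n^'n" where
  "Pk k = diag_mat (\<lambda>j. if j = k then 0 else 1)"

definition Dk :: "('n::finite \<Rightarrow> real) \<Rightarrow> real \<Rightarrow> 'n \<Rightarrow> real^'n^'n" where
  "Dk lam x k = - diag_mat (\<lambda>j. if j = k then 0 else 1 / (lam j - x))"

definition absDk_sqrt :: "('n::finite \<Rightarrow> real) \<Rightarrow> real \<Rightarrow> 'n \<Rightarrow> real^'n^'n" where
  "absDk_sqrt lam x k = diag_mat (\<lambda>j. if j = k then 0 else 1 / sqrt \<bar>lam j - x\<bar>)"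

definition delta_k :: "('n::finite \<Rightarrow> real) \<Rightarrow> 'n \<Rightarrow> real" where
  "delta_k lam k = Min {\<bar>lam k - lam j\<bar> | j. j \<noteq> k}"

end

theory Submission
  imports Defs
begin
lemma diag_mv: "diag_mat d *v v = (\<chi> i. d i * v$i)"
  proof -
  have "\<And>i. (\<Sum>j\<in>UNIV. (if i = j then d i else 0) * v$j) = d i * v$i"
    by (simp add: if_distrib[of "\<lambda>a. a * _"] cong: if_cong)
  then show ?thesis by (simp add: diag_mat_def matrix_vector_mult_def vec_eq_iff)
qed

lemma neg_diag: "- diag_mat d = diag_mat (\<lambda>j. - d j)"
  by (simp add: diag_mat_def vec_eq_iff)

lemma opn: "norm (M *v u) \<le> mat_opnorm M * norm u"
  unfolding mat_opnorm_def by (rule onorm) simp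

lemma core:
  fixes lam :: "'n::finite \<Rightarrow> real" and E :: "real^'n^'n" and v c :: "real^'n"
  assumes distinct: "inj lam"
    and argmin: "\<And>m. \<bar>lam k - x\<bar> \<le> \<bar>lam m - x\<bar>"
    and vk: "v$k = 0"
    and eq: "\<And>j. j \<noteq> k \<Longrightarrow> (lam j - x) * v$j = -(E *v v)$j - c$j"
  defines "u \<equiv> (\<chi> j. if j = k then 0 else v$j * sqrt \<bar>lam j - x\<bar>)"
  shows "norm u \<le> norm (absDk_sqrt lam x k *v c)
      + mat_opnorm (absDk_sqrt lam x k ** E ** absDk_sqrt lam x k) * norm u"
    and "v = absDk_sqrt lam x k *v u"
proof -
  have ne: "lam j \<noteq> x" if "j \<noteq> k" for j
  proof
    assume "lam j = x"
    with argmin[of j] have "lam k = lam j" by simp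
    with distinct that show False by (metis injD)
  qed
  let ?A = "absDk_sqrt lam x k"
  have vAu: "v = ?A *v u"
    unfolding vec_eq_iff
  proof
    fix j show "v$j = (?A *v u)$j"
    proof (cases "j = k")
      case True then show ?thesis using vk by (simp add: absDk_sqrt_def diag_mv)
    next
      case False
      have "sqrt \<bar>lam j - x\<bar> > 0" using ne[OF False] by simp
      then show ?thesis using False by (simp add: absDk_sqrt_def diag_mv u_def)
    qed
  qed
  show "v = ?A *v u" by (fact vAu)
  have Lu: "(?A ** E ** ?A) *v u = ?A *v (E *v v)"
    by (simp add: vAu matrix_vector_mul_assoc matrix_mul_assoc)
  have "norm u \<le> norm ((?A ** E ** ?A) *v u + ?A *v c)"
  proof (rule norm_le_componentwise_cart)
    fix j
    show "norm (u$j) \<le> norm (((?A ** E ** ?A) *v u + ?A *v c)$j)"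
    proof (cases "j = k")
      case True then show ?thesis by (simp add: u_def)
    next
      case False
      define s where "s = sqrt \<bar>lam j - x\<bar>"
      have s0: "s > 0" using ne[OF False] by (simp add: s_def)
      have ss: "\<bar>lam j - x\<bar> = s * s" using s_def by simp
      have "\<bar>(lam j - x) * v$j\<bar> = \<bar>(E *v v)$j + c$j\<bar>" using eq[OF False] by simp
      hence "s * s * \<bar>v$j\<bar> = \<bar>(E *v v)$j + c$j\<bar>" by (simp add: abs_mult ss)
      hence "\<bar>v$j\<bar> * s = \<bar>(E *v v)$j + c$j\<bar> / s" using s0 by (simp add: field_simps)
      moreover have "((?A ** E ** ?A) *v u + ?A *v c)$j = ((E *v v)$j + c$j) / s"
        unfolding Lu using False by (simp add: absDk_sqrt_def diag_mv s_def add_divide_distrib)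
      ultimately show ?thesis using False s0 by (simp add: u_def s_def abs_mult)
    qed
  qed
  also have "\<dots> \<le> norm ((?A ** E ** ?A) *v u) + norm (?A *v c)" by (rule norm_triangle_ineq)
  also have "\<dots> \<le> mat_opnorm (?A ** E ** ?A) * norm u + norm (?A *v c)" using opn by simp
  finally show "norm u \<le> norm (?A *v c) + mat_opnorm (?A ** E ** ?A) * norm u" by simp
qed

lemma ne_lam:
  fixes lam :: "'n::finite \<Rightarrow> real"
  assumes distinct: "inj lam" and argmin: "\<And>m. \<bar>lam k - x\<bar> \<le> \<bar>lam m - x\<bar>"
    and "j \<noteq> k" shows "lam j \<noteq> x"
proof
  assume "lam j = x"
  with argmin[of j] have "lam k = lam j" by simp
  with distinct assms(3) show False by (metis injD)
qed

lemma Ecol: "(E *v axis k (1::real)) $ j = E $ j $ k"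
proof -
  have "(\<Sum>i\<in>UNIV. E $ j $ i * (if i = k then 1 else 0)) = E $ j $ k"
    by (simp add: if_distrib[of "\<lambda>a. _ * a"] cong: if_cong)
  then show ?thesis by (simp add: matrix_vector_mult_def axis_def)
qed

lemma zero_lemma:
  fixes lam :: "'n::finite \<Rightarrow> real" and E :: "real^'n^'n" and v :: "real^'n"
  assumes distinct: "inj lam"
    and argmin: "\<And>m. \<bar>lam k - x\<bar> \<le> \<bar>lam m - x\<bar>"
    and small: "mat_opnorm (absDk_sqrt lam x k ** E ** absDk_sqrt lam x k) < 1"
    and vk: "v$k = 0"
    and eq: "\<And>j. j \<noteq> k \<Longrightarrow> (lam j - x) * v$j = -(E *v v)$j"
  shows "v = 0"
proof -
  define u where "u \<equiv> (\<chi> j. if j = k then 0 else v$j * sqrt \<bar>lam j - x\<bar>)"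
  have eq': "\<And>j. j \<noteq> k \<Longrightarrow> (lam j - x) * v$j = -(E *v v)$j - (0::real^'n)$j"
    using eq by simp
  note c = core[OF distinct argmin vk eq', folded u_def]
  from c(1) have "norm u \<le> mat_opnorm (absDk_sqrt lam x k ** E ** absDk_sqrt lam x k) * norm u"
    by simp
  hence "(1 - mat_opnorm (absDk_sqrt lam x k ** E ** absDk_sqrt lam x k)) * norm u \<le> 0"
    by (simp add: algebra_simps)
  with small have "norm u \<le> 0" by (simp add: mult_le_0_iff)
  hence "u = 0" by simp
  with c(2) show ?thesis by simp
qed

theorem mainTheorem5:
  fixes lam :: "'n::finite \<Rightarrow> real" and E :: "real^'n^'n" and x :: real and k :: 'n
  assumes nonneg: "\<And>j. lam j \<ge> 0"
    and distinct: "inj lam"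
    and sym: "transpose E = E"
    and eig: "\<exists>v. v \<noteq> 0 \<and> (diag_mat lam + E) *v v = x *\<^sub>R v"
    and argmin: "\<And>m. \<bar>lam k - x\<bar> \<le> \<bar>lam m - x\<bar>"
    and small: "mat_opnorm (absDk_sqrt lam x k ** E ** absDk_sqrt lam x k) < 1"
  shows "invertible (mat 1 - Dk lam x k ** E ** Pk k)
    \<and> (\<forall>\<eta>. \<eta> \<noteq> 0 \<and> (diag_mat lam + E) *v \<eta> = x *\<^sub>R \<eta> \<longrightarrow>
          inner \<eta> (axis k 1) \<noteq> 0
        \<and> (inner \<eta> (axis k 1) = 1 \<longrightarrow>
            norm (\<eta> - axis k 1) \<le>
              sqrt (2 / delta_k lam k)
              * (1 / (1 - mat_opnorm (absDk_sqrt lam x k ** E ** absDk_sqrt lam x k)))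
              * sqrt (\<Sum>j\<in>{j. j \<noteq> k}. (E $ j $ k)^2 / \<bar>lam j - x\<bar>)))"
proof (intro conjI allI impI)
  note ne = ne_lam[OF distinct argmin]
  let ?A = "absDk_sqrt lam x k"
  let ?l = "mat_opnorm (?A ** E ** ?A)"
  show "invertible (mat 1 - Dk lam x k ** E ** Pk k)"
    unfolding invertible_left_inverse matrix_left_invertible_ker
  proof (intro allI impI)
    fix v :: "real^'n"
    assume "(mat 1 - Dk lam x k ** E ** Pk k) *v v = 0"
    hence v: "v = Dk lam x k *v (E *v (Pk k *v v))"
      by (simp add: matrix_vector_mult_diff_rdistrib matrix_vector_mul_assoc matrix_mul_assoc)
    have vk: "v$k = 0" by (subst v) (simp add: Dk_def neg_diag diag_mv)
    have Pv: "Pk k *v v = v" using vk by (simp add: Pk_def diag_mv vec_eq_iff)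
    show "v = 0"
    proof (rule zero_lemma[OF distinct argmin small vk])
      fix j assume j: "j \<noteq> k"
      have "v$j = - (E *v v)$j / (lam j - x)"
        using j by (subst v) (simp add: Pv Dk_def neg_diag diag_mv)
      then show "(lam j - x) * v$j = -(E *v v)$j" using ne[OF j] by simp
    qed
  qed
  fix \<eta> :: "real^'n"
  assume h: "\<eta> \<noteq> 0 \<and> (diag_mat lam + E) *v \<eta> = x *\<^sub>R \<eta>"
  have eqj: "(lam j - x) * \<eta>$j = - (E *v \<eta>)$j" for j
  proof -
    have "((diag_mat lam + E) *v \<eta>)$j = (x *\<^sub>R \<eta>)$j" using h by simp
    thus ?thesis by (simp add: matrix_vector_mult_add_rdistrib diag_mv algebra_simps)
  qed
  have ik: "inner \<eta> (axis k 1) = \<eta>$k" by (simp add: inner_axis)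
  show "inner \<eta> (axis k 1) \<noteq> 0"
  proof
    assume "inner \<eta> (axis k 1) = 0"
    hence "\<eta>$k = 0" using ik by simp
    from zero_lemma[OF distinct argmin small this eqj] h show False by simp
  qed
  assume "inner \<eta> (axis k 1) = 1"
  hence e1: "\<eta>$k = 1" using ik by simp
  define v where "v = \<eta> - axis k 1"
  define c where "c = E *v axis k (1::real)"
  have vk: "v$k = 0" using e1 by (simp add: v_def)
  have eqv: "(lam j - x) * v$j = -(E *v v)$j - c$j" if "j \<noteq> k" for j
    using eqj[of j] that by (simp add: v_def c_def matrix_vector_mult_diff_distrib axis_def)
  define u where "u \<equiv> (\<chi> j. if j = k then 0 else v$j * sqrt \<bar>lam j - x\<bar>)"
  have cr1: "norm u \<le> norm (?A *v c) + ?l * norm u"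
    and cr2: "v = ?A *v u"
    using core[OF distinct argmin vk eqv, folded u_def] by blast+
  define N where "N = sqrt (\<Sum>j\<in>{j. j \<noteq> k}. (E $ j $ k)^2 / \<bar>lam j - x\<bar>)"
  have N: "norm (?A *v c) = N"
  proof -
    have "norm (?A *v c) = sqrt (\<Sum>j\<in>UNIV. (if j = k then 0 else (E $ j $ k)^2 / \<bar>lam j - x\<bar>))"
      unfolding norm_vec_def L2_set_def
      by (intro arg_cong[where f=sqrt] sum.cong refl)
        (simp add: absDk_sqrt_def diag_mv c_def Ecol power_mult_distrib power_divide)
    also have "(\<Sum>j\<in>UNIV. (if j = k then 0 else (E $ j $ k)^2 / \<bar>lam j - x\<bar>))
        = (\<Sum>j\<in>{j. j \<noteq> k}. (if j = k then 0 else (E $ j $ k)^2 / \<bar>lam j - x\<bar>))"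
      by (rule sum.mono_neutral_right) auto
    finally show ?thesis by (simp add: N_def)
  qed
  have l1: "?l < 1" by (fact small)
  have nu: "norm u \<le> N / (1 - ?l)"
    using cr1 l1 N by (simp add: field_simps)
  show "norm (\<eta> - axis k 1) \<le> sqrt (2 / delta_k lam k) * (1 / (1 - ?l)) * N"
  proof (cases "\<exists>j. j \<noteq> k")
    case False
    have "v = 0"
    proof (rule vec_eq_iff[THEN iffD2], intro allI)
      fix j have "j = k" using False by blast
      thus "v$j = 0$j" using vk by simp
    qed
    moreover have "N = 0" using False by (simp add: N_def)
    ultimately show ?thesis by (simp add: v_def)
  next
    case True
    then obtain j0 where j0: "j0 \<noteq> k" by blast
    let ?S = "{\<bar>lam k - lam j\<bar> | j. j \<noteq> k}"
    have fin: "finite ?S" by simp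
    have d0: "delta_k lam k > 0"
    proof -
      have "delta_k lam k \<in> ?S" unfolding delta_k_def using fin j0 by (intro Min_in) auto
      then obtain j where "j \<noteq> k" "delta_k lam k = \<bar>lam k - lam j\<bar>" by blast
      with distinct show ?thesis by (auto dest: injD)
    qed
    have dle: "delta_k lam k \<le> 2 * \<bar>lam j - x\<bar>" if "j \<noteq> k" for j
    proof -
      have "delta_k lam k \<le> \<bar>lam k - lam j\<bar>" unfolding delta_k_def
        using fin that by (intro Min_le) auto
      also have "\<dots> \<le> 2 * \<bar>lam j - x\<bar>" using argmin[of j] by (simp add: abs_le_iff abs_if split: if_splits; linarith)
      finally show ?thesis .
    qed
    define C where "C = sqrt (2 / delta_k lam k)"
    have C0: "C \<ge> 0" using d0 by (simp add: C_def)
    have "norm v \<le> norm (C *\<^sub>R u)"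
    proof (rule norm_le_componentwise_cart)
      fix j show "norm (v$j) \<le> norm ((C *\<^sub>R u)$j)"
      proof (cases "j = k")
        case True then show ?thesis using vk by simp
      next
        case False
        have p: "\<bar>lam j - x\<bar> > 0" using ne[OF False] by simp
        have vj: "v$j = u$j / sqrt \<bar>lam j - x\<bar>"
          using cr2 False by (subst (asm) vec_eq_iff) (simp add: absDk_sqrt_def diag_mv)
        have "1 / \<bar>lam j - x\<bar> \<le> 2 / delta_k lam k"
          using dle[OF False] p d0 by (simp add: field_simps)
        hence "sqrt (1 / \<bar>lam j - x\<bar>) \<le> C" unfolding C_def by (rule real_sqrt_le_mono)
        hence "1 / sqrt \<bar>lam j - x\<bar> \<le> C" by (simp add: real_sqrt_divide)
        hence "\<bar>u$j\<bar> * (1 / sqrt \<bar>lam j - x\<bar>) \<le> \<bar>u$j\<bar> * C" by (rule mult_left_mono) simp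
        then show ?thesis using C0 by (simp add: vj abs_mult abs_divide mult.commute)
      qed
    qed
    also have "\<dots> = C * norm u" using C0 by simp
    also have "\<dots> \<le> C * (N / (1 - ?l))" using nu C0 by (rule mult_left_mono)
    finally show ?thesis by (simp add: v_def C_def)
  qed
qed
end
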